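(* If $(\lambda_*,z_* )$ is a minimizer of QEPmin, then $\lambda_*$ is the leftmost eigenvalue (the one of smallest real part) of the quadratic eigenvalue problem $(PAP-\lambda I)^2z=\gamma^{-2}b_0b_0^{\top}z$ among those eigenvalues having eigenvectors in $\mathcal N(C^{\top})$.
   Context: Let $A\in\mathbb{R}^{n\times n}$ be symmetric, $C\in\mathbb{R}^{n\times m}$ ($m<n$) full column rank, $b\in\mathbb{R}^m$, $n_0=C(C^{\top}C)^{-1}b$ with $\|n_0\|<1$, $\gamma=\sqrt{1-\|n_0\|^2}$, $P=I-C(C^{\top}C)^{-1}C^{\top}$ (orthogonal projector onto $\mathcal N(C^{\top})$), $b_0=PAn_0$, assumed nonzero. An eigenvalue of the QEP is $\lambda\in\mathbb{C}$ for which a nonzero (complex) vector $z$ satisfies the equation; $z$ is then an eigenvector. QEPmin: minimize $\lambda$ over pairs $(\lambda,z)$ with $\lambda\in\mathbb{R}$, $0\neq z\in\mathcal N(C^{\top})$ and $(PAP-\lambda I)^2z=\gamma^{-2}b_0b_0^{\top}z$. *)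

theory Defs
  imports "HOL-Analysis.Analysis"
begin

text \<open>Setting: A symmetric n x n, C n x m, b in R^m. Dimensions are finite index types.\<close>

definition n0_vec :: "real^'m^'n \<Rightarrow> real^'m \<Rightarrow> real^'n" where
  "n0_vec C b = C *v (matrix_inv (transpose C ** C) *v b)"

definition gamma_of :: "real^'m^'n \<Rightarrow> real^'m \<Rightarrow> real" where
  "gamma_of C b = sqrt (1 - (norm (n0_vec C b))\<^sup>2)"

definition proj_P :: "real^'m^'n \<Rightarrow> real^'n^'n" where
  "proj_P C = mat 1 - C ** matrix_inv (transpose C ** C) ** transpose C"

definition b0_vec :: "real^'n^'n \<Rightarrow> real^'m^'n \<Rightarrow> real^'m \<Rightarrow> real^'n" where
  "b0_vec A C b = proj_P C *v (A *v n0_vec C b)"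

definition outer :: "real^'n \<Rightarrow> real^'n \<Rightarrow> real^'n^'n" where
  "outer u v = (\<chi> i j. u $ i * v $ j)"

text \<open>Complexification of a real matrix.\<close>
definition cmat :: "real^'a^'b \<Rightarrow> complex^'a^'b" where
  "cmat M = (\<chi> i j. complex_of_real (M $ i $ j))"

text \<open>Real QEP equation (PAP - lam I)^2 z = gamma^-2 b0 b0^T z.\<close>
definition QEP_real_eq :: "real^'n^'n \<Rightarrow> real^'m^'n \<Rightarrow> real^'m \<Rightarrow> real \<Rightarrow> real^'n \<Rightarrow> bool" where
  "QEP_real_eq A C b lam z \<longleftrightarrow>
     (let M = proj_P C ** A ** proj_P C - mat lam in
      (M ** M) *v z = (1 / (gamma_of C b)\<^sup>2) *\<^sub>R (outer (b0_vec A C b) (b0_vec A C b) *v z))"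

text \<open>Admissible pairs of QEPmin: lam real, 0 \<noteq> z \<in> N(C^T), QEP holds.\<close>
definition QEPmin_feasible :: "real^'n^'n \<Rightarrow> real^'m^'n \<Rightarrow> real^'m \<Rightarrow> real \<Rightarrow> real^'n \<Rightarrow> bool" where
  "QEPmin_feasible A C b lam z \<longleftrightarrow>
     z \<noteq> 0 \<and> transpose C *v z = 0 \<and> QEP_real_eq A C b lam z"

definition QEPmin_minimizer :: "real^'n^'n \<Rightarrow> real^'m^'n \<Rightarrow> real^'m \<Rightarrow> real \<Rightarrow> real^'n \<Rightarrow> bool" where
  "QEPmin_minimizer A C b lam z \<longleftrightarrow>
     QEPmin_feasible A C b lam z \<and>
     (\<forall>lam' z'. QEPmin_feasible A C b lam' z' \<longrightarrow> lam \<le> lam')"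

text \<open>Complex QEP equation (PAP - mu I)^2 z = gamma^-2 b0 b0^T z, with z complex.\<close>
definition QEP_complex_eq :: "real^'n^'n \<Rightarrow> real^'m^'n \<Rightarrow> real^'m \<Rightarrow> complex \<Rightarrow> complex^'n \<Rightarrow> bool" where
  "QEP_complex_eq A C b mu z \<longleftrightarrow>
     (let M = cmat (proj_P C ** A ** proj_P C) - mat mu in
      (M ** M) *v z = cmat ((1 / (gamma_of C b)\<^sup>2) *\<^sub>R outer (b0_vec A C b) (b0_vec A C b)) *v z)"

text \<open>mu is an eigenvalue of the QEP having an eigenvector in N(C^T).\<close>
definition QEP_eigenvalue_in_N :: "real^'n^'n \<Rightarrow> real^'m^'n \<Rightarrow> real^'m \<Rightarrow> complex \<Rightarrow> bool" where
  "QEP_eigenvalue_in_N A C b mu \<longleftrightarrow>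
     (\<exists>z::complex^'n. z \<noteq> 0 \<and> transpose (cmat C) *v z = 0 \<and> QEP_complex_eq A C b mu z)"

end

theory Submission
  imports Defs
begin

lemma inner_transpose_mv: "(x::real^'n) \<bullet> (transpose M *v w) = w \<bullet> (M *v x)"
  by (metis dot_lmul_matrix inner_commute transpose_matrix_vector)

lemma gram_inv:
  fixes C :: "real^'m^'n"
  assumes "rank C = CARD('m)"
  shows "(transpose C ** C) ** matrix_inv (transpose C ** C) = mat 1"
proof -
  have inj: "inj ((*v) C)" using assms full_rank_injective by blast
  have ker: "\<forall>x. (transpose C ** C) *v x = 0 \<longrightarrow> x = 0"
  proof (intro allI impI)
    fix x assume "(transpose C ** C) *v x = 0"
    then have "x \<bullet> (transpose C *v (C *v x)) = 0" by (simp add: matrix_vector_mul_assoc)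
    then have "(C *v x) \<bullet> (C *v x) = 0" by (simp only: inner_transpose_mv)
    then have "C *v x = C *v 0" by simp
    then show "x = 0" using inj by (meson injD)
  qed
  then obtain B where "B ** (transpose C ** C) = mat 1"
    using matrix_left_invertible_ker by blast
  then have "(transpose C ** C) ** B = mat 1 \<and> B ** (transpose C ** C) = mat 1"
    using matrix_left_right_inverse by blast
  then show ?thesis unfolding matrix_inv_def by (metis (mono_tags, lifting) someI_ex)
qed

lemma CtP:
  fixes C :: "real^'m^'n"
  assumes "rank C = CARD('m)"
  shows "transpose C *v (proj_P C *v w) = 0"
proof -
  have "transpose C *v (proj_P C *v w) = transpose C *v w - ((transpose C ** C) ** matrix_inv (transpose C ** C)) *v (transpose C *v w)"
    unfolding proj_P_def by (simp only: matrix_vector_mult_diff_rdistrib matrix_vector_mult_diff_distrib matrix_vector_mul_assoc[symmetric] matrix_vector_mul_lid)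
  also have "\<dots> = 0" using gram_inv[OF assms] by simp
  finally show ?thesis .
qed

lemma P_fix:
  fixes C :: "real^'m^'n"
  assumes "transpose C *v x = 0"
  shows "proj_P C *v x = x"
  using assms unfolding proj_P_def
  by (simp add: matrix_vector_mult_diff_rdistrib matrix_vector_mul_assoc[symmetric])

lemma P_inner:
  fixes C :: "real^'m^'n"
  assumes "transpose C *v x = 0"
  shows "x \<bullet> (proj_P C *v w) = x \<bullet> w"
proof -
  have "x \<bullet> (C *v (matrix_inv (transpose C ** C) *v (transpose C *v w))) = 0"
    using assms by (metis inner_transpose_mv inner_zero_right inner_commute transpose_transpose)
  then show ?thesis unfolding proj_P_def
    by (simp add: matrix_vector_mult_diff_rdistrib matrix_vector_mul_assoc[symmetric] inner_diff_right)
qed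

lemma small_cubic:
  fixes a b c d :: real
  assumes "a < 0"
  shows "\<exists>s>0. a + s*b + s^2*c + s^3*d < 0"
proof -
  define B where "B = \<bar>b\<bar> + \<bar>c\<bar> + \<bar>d\<bar> + 1"
  define s where "s = min 1 (-a/(2*B))"
  have B: "B > 0" unfolding B_def by simp
  have s0: "s > 0" unfolding s_def using assms B by (simp add: divide_neg_pos)
  have s1: "s \<le> 1" unfolding s_def by simp
  have sB: "s * B \<le> -a/2"
  proof -
    have "s \<le> -a/(2*B)" unfolding s_def by simp
    then have "s * B \<le> (-a/(2*B)) * B" by (rule mult_right_mono) (use B in simp)
    also have "\<dots> = -a/2" using B by (simp add: field_simps)
    finally show ?thesis .
  qed
  have s2: "s^2 \<le> s" using s0 s1 by (simp add: power2_eq_square mult_left_le)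
  have s3: "s^3 \<le> s" using s0 s1 proof -
    have "s^3 = s * s^2" by (simp add: power3_eq_cube power2_eq_square)
    also have "\<dots> \<le> s * 1" using s0 s1 s2 by (intro mult_left_mono) auto
    finally show ?thesis by simp
  qed
  have "\<bar>s*b + s^2*c + s^3*d\<bar> \<le> s*\<bar>b\<bar> + s^2*\<bar>c\<bar> + s^3*\<bar>d\<bar>"
  proof -
    have "\<bar>s*b\<bar> = s*\<bar>b\<bar>" "\<bar>s^2*c\<bar> = s^2*\<bar>c\<bar>" "\<bar>s^3*d\<bar> = s^3*\<bar>d\<bar>"
      using s0 by (simp_all add: abs_mult)
    then show ?thesis by linarith
  qed
  also have "\<dots> \<le> s*\<bar>b\<bar> + s*\<bar>c\<bar> + s*\<bar>d\<bar>"
    using s2 s3 by (intro add_mono mult_right_mono) auto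
  also have "\<dots> < s * B" unfolding B_def using s0 by (simp add: algebra_simps)
  finally have "\<bar>s*b + s^2*c + s^3*d\<bar> < -a/2" using sB by linarith
  then show ?thesis using s0 assms by (intro exI[of _ s]) auto
qed

lemma mat_mv: "mat c *v (x::real^'n) = c *\<^sub>R x"
proof -
  have "\<And>i. (\<Sum>j\<in>UNIV. (if i = j then c else 0) * x $ j) = c * x $ i"
  proof -
    fix i
    have "(\<Sum>j\<in>UNIV. (if i = j then c else 0) * x $ j) = (\<Sum>j\<in>UNIV. if i = j then c * x $ j else 0)"
      by (rule sum.cong) auto
    then show "(\<Sum>j\<in>UNIV. (if i = j then c else 0) * x $ j) = c * x $ i" by simp
  qed
  then show ?thesis by (simp add: vec_eq_iff matrix_vector_mult_def mat_def)
qed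

lemma mv_scaleR: "(A::real^'n^'m) *v (c *\<^sub>R x) = c *\<^sub>R (A *v x)"
  by (simp add: vec.scale flip: scalar_mult_eq_scaleR)

lemma core:
  fixes S :: "real^'n^'n" and Ct :: "real^'n^'m" and g v :: "real^'n" and \<alpha> :: real
  assumes Sinv: "\<And>y. Ct *v y = 0 \<Longrightarrow> Ct *v (S *v y) = 0"
    and Ssym: "\<And>x y. Ct *v x = 0 \<Longrightarrow> Ct *v y = 0 \<Longrightarrow> x \<bullet> (S *v y) = y \<bullet> (S *v x)"
    and gN: "Ct *v g = 0"
    and vN: "Ct *v v = 0" and v0: "v \<noteq> 0" and vle: "v \<bullet> (S *v v) \<le> \<alpha> * (v \<bullet> v)"
  shows "\<exists>lam w. lam \<le> \<alpha> \<and> w \<noteq> 0 \<and> Ct *v w = 0 \<and>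
           (S - mat lam) *v ((S - mat lam) *v w) = (g \<bullet> w) *\<^sub>R g"
proof -
  define N where "N = {y. Ct *v y = 0}"
  have N_add: "x + y \<in> N" if "x \<in> N" "y \<in> N" for x y
    using that unfolding N_def by (simp add: matrix_vector_right_distrib)
  have N_diff: "x - y \<in> N" if "x \<in> N" "y \<in> N" for x y
    using that unfolding N_def by (simp add: matrix_vector_mult_diff_distrib)
  have N_scale: "c *\<^sub>R x \<in> N" if "x \<in> N" for x c
    using that unfolding N_def by (simp add: mv_scaleR)
  have N_S: "S *v x \<in> N" if "x \<in> N" for x using that Sinv unfolding N_def by simp
  have gN': "g \<in> N" using gN unfolding N_def by simp
  have vN': "v \<in> N" using vN unfolding N_def by simp
  have sym: "x \<bullet> (S *v y) = y \<bullet> (S *v x)" if "x \<in> N" "y \<in> N" for x y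
    using that Ssym unfolding N_def by simp
  have subN: "subspace N"
    unfolding subspace_def N_def by (simp add: matrix_vector_right_distrib mv_scaleR)
  define U where "U = N \<inter> sphere 0 1"
  have "closed N" unfolding N_def
    by (intro closed_Collect_eq continuous_intros)
  then have cU: "compact U" unfolding U_def by (simp add: closed_Int_compact)
  have vU: "(1 / norm v) *\<^sub>R v \<in> U" unfolding U_def using v0 vN' N_scale by simp
  define \<phi> where "\<phi> y = y \<bullet> (S *v y) + 2 * (g \<bullet> y)" for y
  have "continuous_on U \<phi>" unfolding \<phi>_def
    by (intro continuous_intros matrix_vector_mult_linear_continuous_on)
  then obtain a where aU: "a \<in> U" and amin: "\<And>y. y \<in> U \<Longrightarrow> \<phi> a \<le> \<phi> y"
    using continuous_attains_inf[OF cU] vU by blast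
  have aN: "a \<in> N" and a1: "norm a = 1" using aU unfolding U_def by auto
  have aa: "a \<bullet> a = 1" using a1 by (simp add: power2_norm_eq_inner[symmetric])
  define lam where "lam = a \<bullet> (S *v a) + g \<bullet> a"
  define r where "r = S *v a + g - lam *\<^sub>R a"
  have rN: "r \<in> N" unfolding r_def using aN gN' N_S N_add N_diff N_scale by simp
  have ra: "r \<bullet> a = 0" unfolding r_def lam_def using aa
    by (simp add: inner_diff_left inner_add_left inner_diff_right inner_add_right inner_commute)
  have r0: "r = 0"
  proof (rule ccontr)
    assume rne: "r \<noteq> 0"
    define e where "e = (1 / norm r) *\<^sub>R r"
    have eN: "e \<in> N" unfolding e_def using rN N_scale by simp
    have ea: "e \<bullet> a = 0" unfolding e_def using ra by simp
    have ee: "e \<bullet> e = 1" unfolding e_def using rne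
      by (simp add: power2_norm_eq_inner[symmetric] power2_eq_square)
    have er: "e \<bullet> r = norm r" unfolding e_def using rne
      by (simp add: power2_norm_eq_inner[symmetric] power2_eq_square)
    define p where "p = a \<bullet> (S *v a)"
    define q where "q = e \<bullet> (S *v a)"
    define t where "t = e \<bullet> (S *v e)"
    define ga where "ga = g \<bullet> a"
    define ge where "ge = g \<bullet> e"
    have qa: "a \<bullet> (S *v e) = q" unfolding q_def using sym[OF aN eN] .
    have qge: "q + ge = norm r"
    proof -
      have "e \<bullet> r = e \<bullet> (S *v a) + e \<bullet> g - lam * (e \<bullet> a)"
        unfolding r_def by (simp add: inner_diff_right inner_add_right)
      then show ?thesis using er ea unfolding q_def ge_def by (simp add: inner_commute)
    qed
    have "norm r > 0" using rne by simp
    then obtain s where s0: "s > 0" and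
      cub: "- norm r + s * (t - p - ga) + s^2 * (q - ge) + s^3 * (- ga) < 0"
      using small_cubic[of "- norm r" "t - p - ga" "q - ge" "- ga"] by auto
    define D where "D = 1 + s^2"
    have D0: "D > 0" unfolding D_def by (simp add: add_pos_nonneg)
    define u where "u = (1 - s^2) *\<^sub>R a - (2 * s) *\<^sub>R e"
    have uN: "u \<in> N" unfolding u_def using aN eN N_scale N_diff by simp
    have uu: "u \<bullet> u = D^2" unfolding u_def D_def using aa ee ea
      by (simp add: inner_diff_left inner_diff_right inner_commute power2_eq_square algebra_simps)
    have nu: "norm u = D"
    proof -
      have "(norm u)^2 = D^2" using uu by (simp add: power2_norm_eq_inner)
      then show ?thesis using D0 by (simp add: power2_eq_iff_nonneg)
    qed
    define w where "w = (1 / D) *\<^sub>R u"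
    have wU: "w \<in> U" unfolding U_def w_def using uN N_scale nu D0 by simp
    have uSu: "u \<bullet> (S *v u) = (1 - s^2)^2 * p - 4 * s * (1 - s^2) * q + 4 * s^2 * t"
      unfolding u_def p_def t_def using qa
      by (simp add: matrix_vector_mult_diff_distrib mv_scaleR inner_diff_left inner_diff_right
          q_def power2_eq_square algebra_simps)
    have gu: "g \<bullet> u = (1 - s^2) * ga - 2 * s * ge"
      unfolding u_def ga_def ge_def by (simp add: inner_diff_right)
    have phw: "\<phi> w * D^2 = u \<bullet> (S *v u) + 2 * D * (g \<bullet> u)"
      unfolding \<phi>_def w_def using D0
      by (simp add: mv_scaleR power2_eq_square field_simps)
    have pha: "\<phi> a = p + 2 * ga" unfolding \<phi>_def p_def ga_def by simp
    have "\<phi> a * D^2 \<le> \<phi> w * D^2" using amin[OF wU] D0 by (simp add: mult_right_mono)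
    moreover have "\<phi> w * D^2 - \<phi> a * D^2 =
        4 * s * (- (q + ge) + s * (t - p - ga) + s^2 * (q - ge) + s^3 * (- ga))"
    proof -
      have "\<phi> w * D^2 - \<phi> a * D^2 = ((1 - s^2)^2 * p - 4 * s * (1 - s^2) * q + 4 * s^2 * t)
          + 2 * D * ((1 - s^2) * ga - 2 * s * ge) - (p + 2 * ga) * D^2"
        using phw pha uSu gu by simp
      then show ?thesis unfolding D_def by (simp add: power2_eq_square power3_eq_cube algebra_simps)
    qed
    moreover have "4 * s * (- (q + ge) + s * (t - p - ga) + s^2 * (q - ge) + s^3 * (- ga)) < 0"
      using cub qge s0 by (simp add: mult_pos_neg)
    ultimately show False by linarith
  qed
  have Sa: "S *v a = lam *\<^sub>R a - g" using r0 unfolding r_def by (simp add: algebra_simps)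
  have xSa: "x \<bullet> (S *v a) = lam * (x \<bullet> a) - g \<bullet> x" for x
    unfolding Sa by (simp add: inner_diff_right inner_commute)
  have Qpos: "x \<bullet> (S *v x) - lam * (x \<bullet> x) \<ge> 0" if xN: "x \<in> N" and xa: "x \<bullet> a \<noteq> 0" for x
  proof -
    have "x \<noteq> 0" using xa by auto
    then have xx: "x \<bullet> x > 0" by simp
    define c where "c = 2 * (x \<bullet> a) / (x \<bullet> x)"
    have cxx: "c * (x \<bullet> x) = 2 * (x \<bullet> a)" unfolding c_def using xx by simp
    have c0: "c \<noteq> 0" unfolding c_def using xa xx by simp
    define w where "w = a - c *\<^sub>R x"
    have wN: "w \<in> N" unfolding w_def using aN xN N_diff N_scale by simp
    have "w \<bullet> w = a \<bullet> a - 2 * c * (x \<bullet> a) + c * (c * (x \<bullet> x))"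
      unfolding w_def by (simp add: inner_diff_left inner_diff_right inner_commute algebra_simps)
    then have "w \<bullet> w = 1" using aa cxx by (simp add: algebra_simps)
    then have "norm w = 1" by (simp add: norm_eq_1)
    then have wU: "w \<in> U" unfolding U_def using wN by simp
    have symax: "a \<bullet> (S *v x) = x \<bullet> (S *v a)" using sym[OF aN xN] .
    have "\<phi> w = a \<bullet> (S *v a) - 2 * c * (x \<bullet> (S *v a)) + c^2 * (x \<bullet> (S *v x)) + 2 * (g \<bullet> a) - 2 * c * (g \<bullet> x)"
      unfolding \<phi>_def w_def using symax
      by (simp add: matrix_vector_mult_diff_distrib mv_scaleR inner_diff_left inner_diff_right
          power2_eq_square algebra_simps)
    then have "\<phi> w - \<phi> a = c^2 * (x \<bullet> (S *v x)) - c * lam * (2 * (x \<bullet> a))"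
      unfolding \<phi>_def xSa by (simp add: algebra_simps)
    also have "\<dots> = c^2 * (x \<bullet> (S *v x) - lam * (x \<bullet> x))"
      unfolding cxx[symmetric] by (simp add: power2_eq_square algebra_simps)
    finally have "c^2 * (x \<bullet> (S *v x) - lam * (x \<bullet> x)) \<ge> 0" using amin[OF wU] by linarith
    moreover have "c^2 > 0" using c0 by simp
    ultimately show ?thesis by (simp add: zero_le_mult_iff)
  qed
  have lamle: "lam \<le> \<alpha>"
  proof (rule ccontr)
    assume "\<not> lam \<le> \<alpha>"
    have vv: "v \<bullet> v > 0" using v0 by simp
    have Qv: "v \<bullet> (S *v v) - lam * (v \<bullet> v) < 0"
    proof -
      have "\<alpha> * (v \<bullet> v) < lam * (v \<bullet> v)" using vv \<open>\<not> lam \<le> \<alpha>\<close> by simp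
      then show ?thesis using vle by linarith
    qed
    show False
    proof (cases "v \<bullet> a = 0")
      case False
      then show False using Qpos[OF vN' False] Qv by linarith
    next
      case True
      obtain t where t0: "t > 0" and
        tc: "(v \<bullet> (S *v v) - lam * (v \<bullet> v)) + t * (2 * (v \<bullet> (S *v a))) + t^2 * (a \<bullet> (S *v a) - lam) + t^3 * 0 < 0"
        using small_cubic[OF Qv] by blast
      define x where "x = v + t *\<^sub>R a"
      have xN: "x \<in> N" unfolding x_def using vN' aN N_add N_scale by simp
      have xa: "x \<bullet> a = t" unfolding x_def using True aa by (simp add: inner_add_left)
      have symav: "a \<bullet> (S *v v) = v \<bullet> (S *v a)" using sym[OF aN vN'] .
      have "x \<bullet> (S *v x) - lam * (x \<bullet> x) = (v \<bullet> (S *v v) - lam * (v \<bullet> v)) + t * (2 * (v \<bullet> (S *v a))) + t^2 * (a \<bullet> (S *v a) - lam)"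
        unfolding x_def using True aa symav
        by (simp add: matrix_vector_right_distrib mv_scaleR inner_add_left inner_add_right
            inner_commute power2_eq_square algebra_simps)
      then show False using Qpos[OF xN] xa t0 tc by simp
    qed
  qed
  define M0 where "M0 = S - mat lam"
  have M0x: "M0 *v x = S *v x - lam *\<^sub>R x" for x
    unfolding M0_def by (simp add: matrix_vector_mult_diff_rdistrib mat_mv)
  have M0N: "M0 *v x \<in> N" if "x \<in> N" for x
    unfolding M0x using that N_S N_scale N_diff by simp
  show ?thesis
  proof (cases "\<exists>e\<in>N. e \<noteq> 0 \<and> M0 *v e = 0")
    case True
    then obtain e where eN: "e \<in> N" and e0: "e \<noteq> 0" and Me: "M0 *v e = 0" by blast
    have Se: "S *v e = lam *\<^sub>R e" using Me unfolding M0x by simp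
    have "g \<bullet> e = lam * (a \<bullet> e) - e \<bullet> (S *v a)"
      using xSa[of e] by (simp add: inner_commute)
    also have "e \<bullet> (S *v a) = a \<bullet> (S *v e)" using sym[OF eN aN] .
    finally have "g \<bullet> e = 0" unfolding Se by simp
    then show ?thesis using lamle e0 eN Me unfolding M0_def N_def
      by (intro exI[of _ lam] exI[of _ e]) (simp add: matrix_vector_mult_0_right)
  next
    case False
    have inj: "inj_on ((*v) M0) N"
    proof (rule inj_onI)
      fix x y assume "x \<in> N" "y \<in> N" "M0 *v x = M0 *v y"
      then have "x - y \<in> N" "M0 *v (x - y) = 0"
        using N_diff by (auto simp: matrix_vector_mult_diff_distrib)
      then show "x = y" using False by auto
    qed
    have lin: "linear ((*v) M0)" by (rule matrix_vector_mul_linear)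
    have spanN: "span N = N" using subN by (simp add: span_eq_iff)
    have d: "dim ((*v) M0 ` N) = dim N" using dim_image_eq[OF lin, of N] inj unfolding spanN by blast
    have si: "subspace ((*v) M0 ` N)" using lin subN by (rule linear_subspace_image)
    have ss: "(*v) M0 ` N \<subseteq> N" using M0N by auto
    have img: "(*v) M0 ` N = N" using subspace_dim_equal[OF si subN ss] d by linarith
    have "a \<in> (*v) M0 ` N" using aN img by simp
    then obtain w where wN: "w \<in> N" and Mw: "M0 *v w = a" by blast
    have w0: "w \<noteq> 0"
    proof
      assume "w = 0"
      then have "a = 0" using Mw by (simp add: matrix_vector_mult_0_right)
      then show False using aa by simp
    qed
    have MMw: "M0 *v (M0 *v w) = - g"
    proof -
      have "M0 *v (M0 *v w) = M0 *v a" using Mw by simp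
      also have "\<dots> = - g" unfolding M0x Sa by simp
      finally show ?thesis .
    qed
    have "a \<bullet> (M0 *v w) = 1" using Mw aa by simp
    then have e1: "a \<bullet> (S *v w) - lam * (a \<bullet> w) = 1" unfolding M0x by (simp add: inner_diff_right)
    have e2: "a \<bullet> (S *v w) = w \<bullet> (S *v a)" using sym[OF aN wN] .
    have e3: "w \<bullet> (S *v a) = lam * (w \<bullet> a) - g \<bullet> w" using xSa[of w] .
    have e4: "a \<bullet> w = w \<bullet> a" by (rule inner_commute)
    have e5: "w \<bullet> (S *v a) = lam * (a \<bullet> w) - g \<bullet> w" using e3 e4 by simp
    have gw: "g \<bullet> w = -1" using e1 e2 e5 by linarith
    show ?thesis using lamle w0 wN MMw unfolding M0_def N_def
      by (intro exI[of _ lam] exI[of _ w]) (simp add: gw)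
  qed
qed

definition vre :: "complex^'n \<Rightarrow> real^'n" where "vre z = (\<chi> i. Re (z$i))"
definition vim :: "complex^'n \<Rightarrow> real^'n" where "vim z = (\<chi> i. Im (z$i))"
definition cvec :: "real^'n \<Rightarrow> complex^'n" where "cvec x = (\<chi> i. complex_of_real (x$i))"

lemma vre_cmat: "vre (cmat M *v z) = M *v vre z"
  by (simp add: vec_eq_iff vre_def cmat_def matrix_vector_mult_def Re_sum)

lemma vim_cmat: "vim (cmat M *v z) = M *v vim z"
  by (simp add: vec_eq_iff vim_def cmat_def matrix_vector_mult_def Im_sum)

lemma cmat_mv: "mat c *v (x::complex^'n) = (\<chi> i. c * x$i)"
proof -
  have "\<And>i. (\<Sum>j\<in>UNIV. (if i = j then c else 0) * x $ j) = c * x $ i"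
  proof -
    fix i
    have "(\<Sum>j\<in>UNIV. (if i = j then c else 0) * x $ j) = (\<Sum>j\<in>UNIV. if i = j then c * x $ j else 0)"
      by (rule sum.cong) auto
    then show "(\<Sum>j\<in>UNIV. (if i = j then c else 0) * x $ j) = c * x $ i" by simp
  qed
  then show ?thesis by (simp add: vec_eq_iff matrix_vector_mult_def mat_def)
qed

lemma W_re: "vre ((cmat M - mat \<mu>) *v z) = (M - mat (Re \<mu>)) *v vre z + Im \<mu> *\<^sub>R vim z"
proof -
  have "vre ((cmat M - mat \<mu>) *v z) = vre (cmat M *v z) - vre (mat \<mu> *v z)"
    by (simp add: matrix_vector_mult_diff_rdistrib vre_def vec_eq_iff)
  also have "vre (mat \<mu> *v z) = Re \<mu> *\<^sub>R vre z - Im \<mu> *\<^sub>R vim z"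
    by (simp add: cmat_mv vre_def vim_def vec_eq_iff)
  finally show ?thesis
    by (simp add: vre_cmat matrix_vector_mult_diff_rdistrib mat_mv algebra_simps)
qed

lemma W_im: "vim ((cmat M - mat \<mu>) *v z) = (M - mat (Re \<mu>)) *v vim z - Im \<mu> *\<^sub>R vre z"
proof -
  have "vim ((cmat M - mat \<mu>) *v z) = vim (cmat M *v z) - vim (mat \<mu> *v z)"
    by (simp add: matrix_vector_mult_diff_rdistrib vim_def vec_eq_iff)
  also have "vim (mat \<mu> *v z) = Re \<mu> *\<^sub>R vim z + Im \<mu> *\<^sub>R vre z"
    by (simp add: cmat_mv vre_def vim_def vec_eq_iff)
  finally show ?thesis
    by (simp add: vim_cmat matrix_vector_mult_diff_rdistrib mat_mv algebra_simps)
qed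

lemma cvec_eq_iff: "(z::complex^'n) = w \<longleftrightarrow> vre z = vre w \<and> vim z = vim w"
  by (auto simp: vec_eq_iff vre_def vim_def complex_eq_iff)

lemma vre_cvec[simp]: "vre (cvec x) = x" and vim_cvec[simp]: "vim (cvec x) = 0"
  by (simp_all add: vec_eq_iff vre_def vim_def cvec_def)

lemma vre_zero[simp]: "vre 0 = 0" and vim_zero[simp]: "vim 0 = 0"
  by (simp_all add: vec_eq_iff vre_def vim_def)

lemma transpose_cmat: "transpose (cmat C) = cmat (transpose C)"
  by (simp add: vec_eq_iff transpose_def cmat_def)

lemma outer_mv: "outer u u *v z = (u \<bullet> z) *\<^sub>R u"
  by (simp add: vec_eq_iff outer_def matrix_vector_mult_def inner_vec_def sum_distrib_left algebra_simps)

lemma scaleR_mv: "((c::real) *\<^sub>R (M::real^'n^'m)) *v x = c *\<^sub>R (M *v x)"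
  by (simp add: vec_eq_iff matrix_vector_mult_def sum_distrib_left algebra_simps)

theorem theorem2p10:
  fixes A :: "real^'n^'n" and C :: "real^'m^'n" and b :: "real^'m"
    and lam :: real and z :: "real^'n"
  assumes "transpose A = A"
    and "CARD('m) < CARD('n)"
    and "rank C = CARD('m)"
    and "norm (n0_vec C b) < 1"
    and "b0_vec A C b \<noteq> 0"
    and "QEPmin_minimizer A C b lam z"
  shows "QEP_eigenvalue_in_N A C b (complex_of_real lam) \<and>
         (\<forall>mu. QEP_eigenvalue_in_N A C b mu \<longrightarrow> lam \<le> Re mu)"
proof -
  note rk = assms(3)
  define P where "P = proj_P C"
  define S where "S = P ** A ** P"
  define Ct where "Ct = transpose C"
  define b0 where "b0 = b0_vec A C b"
  define \<gamma> where "\<gamma> = gamma_of C b"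
  define g where "g = (1 / \<gamma>) *\<^sub>R b0"
  define Q where "Q = (1 / \<gamma>\<^sup>2) *\<^sub>R outer b0 b0"
  have Sv: "S *v y = P *v (A *v (P *v y))" for y
    unfolding S_def by (simp add: matrix_vector_mul_assoc matrix_mul_assoc)
  have Sinv: "Ct *v (S *v y) = 0" for y
    unfolding Sv Ct_def P_def using CtP[OF rk] .
  have Asym: "x \<bullet> (A *v y) = y \<bullet> (A *v x)" for x y
    using inner_transpose_mv[of x A y] assms(1) by simp
  have Ssym: "x \<bullet> (S *v y) = y \<bullet> (S *v x)" if "Ct *v x = 0" "Ct *v y = 0" for x y
    using that unfolding Sv Ct_def P_def by (simp add: P_inner P_fix Asym)
  have gN: "Ct *v g = 0"
    unfolding g_def b0_def b0_vec_def Ct_def using CtP[OF rk] by (simp add: mv_scaleR)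
  have Qv: "Q *v x = (g \<bullet> x) *\<^sub>R g" for x
    unfolding Q_def g_def by (simp add: scaleR_mv outer_mv mv_scaleR power2_eq_square)
  have real_eq0: "QEP_real_eq A C b l w \<longleftrightarrow> (S - mat l) *v ((S - mat l) *v w) = Q *v w" for l w
    unfolding QEP_real_eq_def Let_def S_def P_def Q_def b0_def \<gamma>_def
    by (simp add: matrix_vector_mul_assoc[symmetric] scaleR_mv)
  have real_eq: "QEP_real_eq A C b l w \<longleftrightarrow> (S - mat l) *v ((S - mat l) *v w) = (g \<bullet> w) *\<^sub>R g" for l w
    unfolding real_eq0 Qv ..
  have feas: "QEPmin_feasible A C b l w" if "w \<noteq> 0" "Ct *v w = 0"
      "(S - mat l) *v ((S - mat l) *v w) = (g \<bullet> w) *\<^sub>R g" for l w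
    using that unfolding QEPmin_feasible_def real_eq Ct_def by simp
  have min: "lam \<le> l" if "QEPmin_feasible A C b l w" for l w
    using assms(6) that unfolding QEPmin_minimizer_def by blast
  have zf: "QEPmin_feasible A C b lam z" using assms(6) unfolding QEPmin_minimizer_def by blast
  have cplx: "QEP_complex_eq A C b mu w \<longleftrightarrow>
      (cmat S - mat mu) *v ((cmat S - mat mu) *v w) = cmat Q *v w" for mu w
    unfolding QEP_complex_eq_def Let_def S_def P_def Q_def b0_def \<gamma>_def
    by (simp add: matrix_vector_mul_assoc)
  have N_c: "transpose (cmat C) *v w = 0 \<longleftrightarrow> Ct *v vre w = 0 \<and> Ct *v vim w = 0" for w
    unfolding cvec_eq_iff transpose_cmat vre_cmat vim_cmat Ct_def by simp
  have part1: "QEP_eigenvalue_in_N A C b (complex_of_real lam)"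
  proof -
    have z0: "z \<noteq> 0" and zN: "Ct *v z = 0" and zq: "(S - mat lam) *v ((S - mat lam) *v z) = (g \<bullet> z) *\<^sub>R g"
      using zf unfolding QEPmin_feasible_def real_eq Ct_def by auto
    have "cvec z \<noteq> 0" using z0 by (metis vre_cvec vre_zero)
    moreover have "transpose (cmat C) *v cvec z = 0" using N_c zN by simp
    moreover have "QEP_complex_eq A C b (complex_of_real lam) (cvec z)"
      unfolding cplx cvec_eq_iff using zq
      by (simp add: W_re W_im vre_cmat vim_cmat Qv matrix_vector_mult_0_right)
    ultimately show ?thesis unfolding QEP_eigenvalue_in_N_def by blast
  qed
  have part2: "lam \<le> Re mu" if ev: "QEP_eigenvalue_in_N A C b mu" for mu
  proof -
    obtain w where w0: "w \<noteq> 0" and wN: "transpose (cmat C) *v w = 0" and wq: "QEP_complex_eq A C b mu w"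
      using ev unfolding QEP_eigenvalue_in_N_def by blast
    define x where "x = vre w"
    define y where "y = vim w"
    define \<alpha> where "\<alpha> = Re mu"
    define \<beta> where "\<beta> = Im mu"
    define K where "K = S - mat \<alpha>"
    have xN: "Ct *v x = 0" and yN: "Ct *v y = 0" using N_c[of w] wN unfolding x_def y_def by simp_all
    have xy0: "x \<noteq> 0 \<or> y \<noteq> 0" using w0 unfolding x_def y_def by (metis cvec_eq_iff vre_zero vim_zero)
    have eqs: "vre ((cmat S - mat mu) *v ((cmat S - mat mu) *v w)) = vre (cmat Q *v w)"
       "vim ((cmat S - mat mu) *v ((cmat S - mat mu) *v w)) = vim (cmat Q *v w)"
      using wq[unfolded cplx] by (rule arg_cong)+
    have E1: "K *v (K *v x + \<beta> *\<^sub>R y) + \<beta> *\<^sub>R (K *v y - \<beta> *\<^sub>R x) = (g \<bullet> x) *\<^sub>R g"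
      using eqs(1) unfolding W_re W_im vre_cmat Qv K_def x_def y_def \<alpha>_def \<beta>_def .
    have E2: "K *v (K *v y - \<beta> *\<^sub>R x) - \<beta> *\<^sub>R (K *v x + \<beta> *\<^sub>R y) = (g \<bullet> y) *\<^sub>R g"
      using eqs(2) unfolding W_re W_im vim_cmat Qv K_def x_def y_def \<alpha>_def \<beta>_def .
    show ?thesis
    proof (cases "\<beta> = 0")
      case True
      have Fx: "K *v (K *v x) = (g \<bullet> x) *\<^sub>R g" using E1 True by simp
      have Fy: "K *v (K *v y) = (g \<bullet> y) *\<^sub>R g" using E2 True by simp
      show ?thesis
      proof (cases "x = 0")
        case False
        then show ?thesis using min[OF feas[OF False xN Fx[unfolded K_def]]] unfolding \<alpha>_def by simp
      next
        case True
        then have "y \<noteq> 0" using xy0 by simp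
        then show ?thesis using min[OF feas[OF _ yN Fy[unfolded K_def]]] unfolding \<alpha>_def by simp
      qed
    next
      case False
      have Kv: "K *v u = S *v u - \<alpha> *\<^sub>R u" for u
        unfolding K_def by (simp add: matrix_vector_mult_diff_rdistrib mat_mv)
      have KN: "Ct *v (K *v u) = 0" if "Ct *v u = 0" for u
        unfolding Kv using that Sinv by (simp add: matrix_vector_mult_diff_distrib mv_scaleR)
      have Ksym: "u \<bullet> (K *v v) = v \<bullet> (K *v u)" if "Ct *v u = 0" "Ct *v v = 0" for u v
        unfolding Kv using Ssym[OF that] by (simp add: inner_diff_right inner_commute)
      have I1: "y \<bullet> (K *v (K *v x + \<beta> *\<^sub>R y) + \<beta> *\<^sub>R (K *v y - \<beta> *\<^sub>R x))
          = y \<bullet> (K *v (K *v x)) + 2 * \<beta> * (y \<bullet> (K *v y)) - \<beta>^2 * (y \<bullet> x)"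
        by (simp only: matrix_vector_right_distrib matrix_vector_mult_diff_distrib mv_scaleR
            inner_add_right inner_diff_right inner_scaleR_right) (simp add: power2_eq_square algebra_simps)
      have I2: "x \<bullet> (K *v (K *v y - \<beta> *\<^sub>R x) - \<beta> *\<^sub>R (K *v x + \<beta> *\<^sub>R y))
          = x \<bullet> (K *v (K *v y)) - 2 * \<beta> * (x \<bullet> (K *v x)) - \<beta>^2 * (x \<bullet> y)"
        by (simp only: matrix_vector_right_distrib matrix_vector_mult_diff_distrib mv_scaleR
            inner_add_right inner_diff_right inner_scaleR_right) (simp add: power2_eq_square algebra_simps)
      have J1: "y \<bullet> (K *v (K *v x)) = (K *v x) \<bullet> (K *v y)" using Ksym[OF yN KN[OF xN]] .
      have J2: "x \<bullet> (K *v (K *v y)) = (K *v x) \<bullet> (K *v y)"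
        using Ksym[OF xN KN[OF yN]] by (simp add: inner_commute)
      have R1: "y \<bullet> ((g \<bullet> x) *\<^sub>R g) = (g \<bullet> x) * (g \<bullet> y)" by (simp add: inner_commute)
      have R2: "x \<bullet> ((g \<bullet> y) *\<^sub>R g) = (g \<bullet> x) * (g \<bullet> y)" by (simp add: inner_commute)
      have xy: "x \<bullet> y = y \<bullet> x" by (rule inner_commute)
      have "2 * \<beta> * (y \<bullet> (K *v y)) + 2 * \<beta> * (x \<bullet> (K *v x)) = 0"
        using I1 I2 J1 J2 R1 R2 E1 E2 xy by (smt (verit))
      then have "\<beta> * ((x \<bullet> (K *v x)) + (y \<bullet> (K *v y))) = 0" by (simp add: algebra_simps)
      then have sum0: "(x \<bullet> (K *v x)) + (y \<bullet> (K *v y)) = 0" using False by simp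
      have Kform: "u \<bullet> (K *v u) = u \<bullet> (S *v u) - \<alpha> * (u \<bullet> u)" for u
        unfolding Kv by (simp add: inner_diff_right)
      obtain v where vN: "Ct *v v = 0" and v0: "v \<noteq> 0" and vle: "v \<bullet> (S *v v) \<le> \<alpha> * (v \<bullet> v)"
      proof (cases "x \<noteq> 0 \<and> x \<bullet> (K *v x) \<le> 0")
        case True
        then show ?thesis using that[of x] xN Kform[of x] by simp
      next
        case False
        then have "y \<noteq> 0 \<and> y \<bullet> (K *v y) \<le> 0" using sum0 xy0
          by (auto simp: matrix_vector_mult_0_right)
        then show ?thesis using that[of y] yN Kform[of y] by simp
      qed
      obtain l w' where "l \<le> \<alpha>" "w' \<noteq> 0" "Ct *v w' = 0"
          "(S - mat l) *v ((S - mat l) *v w') = (g \<bullet> w') *\<^sub>R g"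
        using core[of Ct S g v \<alpha>, OF Sinv Ssym gN vN v0 vle] by blast
      then show ?thesis using min[OF feas] unfolding \<alpha>_def by fastforce
    qed
  qed
  show ?thesis
    by (intro conjI allI impI part1 part2)
qed

end
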